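(* For every $s\in I(\Phi)$ there exist a Weyl chamber $C$, a special involution $\varepsilon\in I^*(\Phi)$ and pairwise strongly orthogonal roots $\beta_1,\dots,\beta_r\in\Phi^\varepsilon_\circ\cap\Phi^s_\bullet$ such that $s=\varepsilon\circ s_{\beta_1}\circ\cdots\circ s_{\beta_r}$, $C$ is an S-chamber for $s$, and $C$ is also an S-chamber for $\varepsilon$ (i.e. $\varepsilon(\Phi^+(C))=\Phi^+(C)$).
   Context: $\Phi$ is a reduced crystallographic root system spanning a real Euclidean space $V$; $s_\beta$ is the reflection in $\beta^\perp$; $I(\Phi)$ is the set of orthogonal involutions of $V$ preserving $\Phi$. For $s\in I(\Phi)$: $\Phi^s_\circ=\{\alpha:s\alpha=\alpha\}$, $\Phi^s_\bullet=\{\alpha:s\alpha=-\alpha\}$, $\Phi^s_\star=\Phi\setminus(\Phi^s_\circ\cup\Phi^s_\bullet)$. $\varepsilon\in I(\Phi)$ is special if $\Phi^\varepsilon_\bullet=\emptyset$; $I^*(\Phi)$ is the set of special involutions. Distinct roots are strongly orthogonal if they are orthogonal and neither their sum nor difference is a root. For a Weyl chamber $C$ with positive roots $\Phi^+(C)$, $C$ is an S-chamber for $s$ if $s(\Phi^+(C)\cap\Phi^s_\star)\subseteq\Phi^+(C)$. *)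

theory Defs
  imports "HOL-Analysis.Analysis"
begin

definition refl :: "'a::euclidean_space \<Rightarrow> 'a \<Rightarrow> 'a" where
  "refl \<beta> x = x - ((2 * (x \<bullet> \<beta>)) / (\<beta> \<bullet> \<beta>)) *\<^sub>R \<beta>"

definition reduced_cryst_root_system :: "'a::euclidean_space set \<Rightarrow> bool" where
  "reduced_cryst_root_system \<Phi> \<longleftrightarrow>
     finite \<Phi> \<and> 0 \<notin> \<Phi> \<and> span \<Phi> = UNIV \<and>
     (\<forall>\<alpha>\<in>\<Phi>. refl \<alpha> ` \<Phi> = \<Phi>) \<and>
     (\<forall>\<alpha>\<in>\<Phi>. \<forall>\<beta>\<in>\<Phi>. 2 * (\<alpha> \<bullet> \<beta>) / (\<beta> \<bullet> \<beta>) \<in> \<int>) \<and>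
     (\<forall>\<alpha>\<in>\<Phi>. \<forall>c::real. c *\<^sub>R \<alpha> \<in> \<Phi> \<longrightarrow> c = 1 \<or> c = -1)"

definition inv_set :: "'a::euclidean_space set \<Rightarrow> ('a \<Rightarrow> 'a) set" where
  "inv_set \<Phi> = {s. orthogonal_transformation s \<and> s \<circ> s = id \<and> s ` \<Phi> = \<Phi>}"

definition Phi_circ :: "'a::euclidean_space set \<Rightarrow> ('a \<Rightarrow> 'a) \<Rightarrow> 'a set" where
  "Phi_circ \<Phi> s = {\<alpha>\<in>\<Phi>. s \<alpha> = \<alpha>}"

definition Phi_bullet :: "'a::euclidean_space set \<Rightarrow> ('a \<Rightarrow> 'a) \<Rightarrow> 'a set" where
  "Phi_bullet \<Phi> s = {\<alpha>\<in>\<Phi>. s \<alpha> = - \<alpha>}"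

definition Phi_star :: "'a::euclidean_space set \<Rightarrow> ('a \<Rightarrow> 'a) \<Rightarrow> 'a set" where
  "Phi_star \<Phi> s = \<Phi> - (Phi_circ \<Phi> s \<union> Phi_bullet \<Phi> s)"

definition special_inv_set :: "'a::euclidean_space set \<Rightarrow> ('a \<Rightarrow> 'a) set" where
  "special_inv_set \<Phi> = {\<epsilon>\<in>inv_set \<Phi>. Phi_bullet \<Phi> \<epsilon> = {}}"

definition strongly_orthogonal :: "'a::euclidean_space set \<Rightarrow> 'a \<Rightarrow> 'a \<Rightarrow> bool" where
  "strongly_orthogonal \<Phi> \<alpha> \<beta> \<longleftrightarrow>
     \<alpha> \<noteq> \<beta> \<and> \<alpha> \<bullet> \<beta> = 0 \<and> \<alpha> + \<beta> \<notin> \<Phi> \<and> \<alpha> - \<beta> \<notin> \<Phi>"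

definition weyl_chamber :: "'a::euclidean_space set \<Rightarrow> 'a set \<Rightarrow> bool" where
  "weyl_chamber \<Phi> C \<longleftrightarrow>
     (let U = - (\<Union>\<alpha>\<in>\<Phi>. {x. \<alpha> \<bullet> x = 0}) in
        \<exists>x\<in>U. C = connected_component_set U x)"

definition pos_roots :: "'a::euclidean_space set \<Rightarrow> 'a set \<Rightarrow> 'a set" where
  "pos_roots \<Phi> C = {\<alpha>\<in>\<Phi>. \<forall>x\<in>C. 0 < \<alpha> \<bullet> x}"

definition S_chamber :: "'a::euclidean_space set \<Rightarrow> ('a \<Rightarrow> 'a) \<Rightarrow> 'a set \<Rightarrow> bool" where
  "S_chamber \<Phi> s C \<longleftrightarrow> s ` (pos_roots \<Phi> C \<inter> Phi_star \<Phi> s) \<subseteq> pos_roots \<Phi> C"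

end

theory Submission imports Defs begin

lemma ot_selfadj:
  assumes "orthogonal_transformation f" "f \<circ> f = id"
  shows "f x \<bullet> y = x \<bullet> f y"
proof -
  have "f (f y) = y" using assms(2) by (metis comp_apply id_apply)
  then have "f x \<bullet> y = f x \<bullet> f (f y)" by simp
  also have "\<dots> = x \<bullet> f y" using assms(1) by (simp add: orthogonal_transformation_def)
  finally show ?thesis .
qed

lemma refl_linear: "linear (refl b)"
  unfolding refl_def
  by (rule linearI) (simp_all add: inner_add_left algebra_simps add_divide_distrib)

lemma refl_inner:
  assumes "b \<noteq> 0"
  shows "refl b x \<bullet> refl b y = x \<bullet> y"
proof -
  have bb: "b \<bullet> b \<noteq> 0" using assms by simp
  show ?thesis unfolding refl_def
    using bb by (simp add: inner_diff_left inner_diff_right inner_commute field_simps)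
qed

lemma refl_ot: "b \<noteq> 0 \<Longrightarrow> orthogonal_transformation (refl b)"
  by (simp add: orthogonal_transformation_def refl_linear refl_inner)

lemma refl_self: "b \<noteq> 0 \<Longrightarrow> refl b b = - b"
  by (simp add: refl_def scaleR_2)

lemma refl_orth: "x \<bullet> b = 0 \<Longrightarrow> refl b x = x"
  by (simp add: refl_def)

lemma refl_refl: "b \<noteq> 0 \<Longrightarrow> refl b (refl b x) = x"
  by (simp add: refl_def inner_diff_left algebra_simps) 

lemma pw_snoc:
  assumes "\<forall>i<length xs. \<forall>j<length xs. i\<noteq>j \<longrightarrow> P (xs!i) (xs!j)"
    and "\<forall>g\<in>set xs. P g b \<and> P b g"
  shows "\<forall>i<length (xs@[b]). \<forall>j<length (xs@[b]). i\<noteq>j \<longrightarrow> P ((xs@[b])!i) ((xs@[b])!j)"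
proof (intro allI impI)
  fix i j assume i: "i < length (xs@[b])" and j: "j < length (xs@[b])" and ij: "i \<noteq> j"
  show "P ((xs@[b])!i) ((xs@[b])!j)"
  proof (cases "i < length xs")
    case True
    show ?thesis
    proof (cases "j < length xs")
      case True
      then show ?thesis using \<open>i < length xs\<close> assms(1) ij by (simp add: nth_append)
    next
      case False
      then have "j = length xs" using j by simp
      then show ?thesis using \<open>i < length xs\<close> assms(2) by (simp add: nth_append)
    qed
  next
    case False
    then have "i = length xs" using i by simp
    then have "j < length xs" using j ij by simp
    then show ?thesis using \<open>i = length xs\<close> assms(2) by (simp add: nth_append)
  qed
qed

lemma inv_setD:
  assumes "s \<in> inv_set \<Phi>"
  shows "orthogonal_transformation s" "s \<circ> s = id" "s ` \<Phi> = \<Phi>" "linear s"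
    "\<And>x. s (s x) = x" "\<And>x y. s x \<bullet> y = x \<bullet> s y"
  using assms unfolding inv_set_def
  by (auto simp: orthogonal_transformation_def ot_selfadj pointfree_idE)

lemma decomp:
  assumes fin: "finite \<Phi>" and z: "0 \<notin> \<Phi>" and R: "\<forall>\<alpha>\<in>\<Phi>. refl \<alpha> ` \<Phi> = \<Phi>"
  shows "s \<in> inv_set \<Phi> \<Longrightarrow> \<exists>\<epsilon> \<beta>s. \<epsilon> \<in> special_inv_set \<Phi> \<and>
           distinct \<beta>s \<and>
           set \<beta>s \<subseteq> Phi_circ \<Phi> \<epsilon> \<inter> Phi_bullet \<Phi> s \<and>
           (\<forall>i<length \<beta>s. \<forall>j<length \<beta>s. i \<noteq> j \<longrightarrow>
               strongly_orthogonal \<Phi> (\<beta>s ! i) (\<beta>s ! j)) \<and>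
           s = foldl (\<lambda>f \<beta>. f \<circ> refl \<beta>) \<epsilon> \<beta>s \<and> (\<forall>v. s v = v \<longrightarrow> \<epsilon> v = v)"
proof (induction "card (Phi_bullet \<Phi> s)" arbitrary: s rule: less_induct)
  case less
  note sI = inv_setD[OF less.prems]
  show ?case
  proof (cases "Phi_bullet \<Phi> s = {}")
    case True
    then show ?thesis
      by (intro exI[of _ s] exI[of _ "[]"]) (simp add: special_inv_set_def less.prems)
  next
    case False
    define \<Psi> where "\<Psi> = Phi_bullet \<Phi> s"
    have finP: "finite \<Psi>" using fin by (simp add: \<Psi>_def Phi_bullet_def)
    define m where "m = Max ((\<lambda>g. g \<bullet> g) ` \<Psi>)"
    have "m \<in> (\<lambda>g. g \<bullet> g) ` \<Psi>" unfolding m_def using finP False \<Psi>_def by (intro Max_in) auto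
    then obtain \<beta> where b\<Psi>: "\<beta> \<in> \<Psi>" and bm: "\<beta> \<bullet> \<beta> = m" by auto
    have maxb: "g \<bullet> g \<le> \<beta> \<bullet> \<beta>" if "g \<in> \<Psi>" for g
      unfolding bm m_def using finP that by (intro Max_ge) auto
    have bPhi: "\<beta> \<in> \<Phi>" and sb: "s \<beta> = - \<beta>" using b\<Psi> by (auto simp: \<Psi>_def Phi_bullet_def)
    have b0: "\<beta> \<noteq> 0" using bPhi z by auto
    have bb: "\<beta> \<bullet> \<beta> > 0" using b0 by simp
    define s' where "s' = s \<circ> refl \<beta>"
    have lin_s: "linear s" by (rule sI(4))
    have srefl: "s (refl \<beta> x) = refl \<beta> (s x)" for x
    proof -
      have "s (refl \<beta> x) = s x + (2 * (x \<bullet> \<beta>) / (\<beta> \<bullet> \<beta>)) *\<^sub>R \<beta>"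
        unfolding refl_def using sb by (simp add: linear_diff[OF lin_s] linear_scale[OF lin_s])
      moreover have "s x \<bullet> \<beta> = - (x \<bullet> \<beta>)" using sI(6)[of x \<beta>] sb by simp
      ultimately show ?thesis unfolding refl_def by simp
    qed
    have s'_inv: "s' \<in> inv_set \<Phi>"
      unfolding inv_set_def s'_def
    proof (intro CollectI conjI)
      show "orthogonal_transformation (s \<circ> refl \<beta>)"
        using sI(1) refl_ot[OF b0] by (rule orthogonal_transformation_compose)
      show "(s \<circ> refl \<beta>) \<circ> (s \<circ> refl \<beta>) = id"
        by (rule ext) (simp add: srefl sI(5) refl_refl[OF b0])
      show "(s \<circ> refl \<beta>) ` \<Phi> = \<Phi>" using R bPhi sI(3) by (metis image_comp)
    qed
    have s'b: "s' \<beta> = \<beta>" by (simp add: s'_def refl_self[OF b0] linear_neg[OF lin_s] sb)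
    have sub: "Phi_bullet \<Phi> s' \<subseteq> {g \<in> \<Psi>. g \<bullet> \<beta> = 0 \<and> g \<noteq> \<beta>}"
    proof
      fix a assume a: "a \<in> Phi_bullet \<Phi> s'"
      then have aPhi: "a \<in> \<Phi>" and sa: "s (refl \<beta> a) = - a" by (auto simp: Phi_bullet_def s'_def)
      define c where "c = 2 * (a \<bullet> \<beta>) / (\<beta> \<bullet> \<beta>)"
      have e: "s a + c *\<^sub>R \<beta> = - a"
        using sa unfolding refl_def c_def using sb by (simp add: linear_diff[OF lin_s] linear_scale[OF lin_s])
      have "(s a + c *\<^sub>R \<beta>) \<bullet> \<beta> = - a \<bullet> \<beta>" using e by simp
      moreover have "s a \<bullet> \<beta> = - (a \<bullet> \<beta>)" using sI(6)[of a \<beta>] sb by simp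
      ultimately have "c * (\<beta> \<bullet> \<beta>) = 0" by (simp add: inner_add_left)
      then have c0: "c = 0" using bb by simp
      then have ab: "a \<bullet> \<beta> = 0" using bb by (simp add: c_def)
      have "s a = - a" using e c0 by simp
      moreover have "a \<noteq> \<beta>"
      proof
        assume "a = \<beta>"
        then have "- \<beta> = \<beta>" using a s'b by (auto simp: Phi_bullet_def)
        then have "(- \<beta>) \<bullet> \<beta> = \<beta> \<bullet> \<beta>" by simp
        then show False using bb by simp
      qed
      ultimately show "a \<in> {g \<in> \<Psi>. g \<bullet> \<beta> = 0 \<and> g \<noteq> \<beta>}" using aPhi ab by (simp add: \<Psi>_def Phi_bullet_def)
    qed
    have "card (Phi_bullet \<Phi> s') < card (Phi_bullet \<Phi> s)"
    proof -
      have "Phi_bullet \<Phi> s' \<subset> \<Psi>" using sub b\<Psi> by auto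
      then show ?thesis using finP \<Psi>_def by (simp add: psubset_card_mono)
    qed
    from less.hyps[OF this s'_inv] obtain \<epsilon> \<beta>s where
      eps: "\<epsilon> \<in> special_inv_set \<Phi>" and dis: "distinct \<beta>s"
      and set: "set \<beta>s \<subseteq> Phi_circ \<Phi> \<epsilon> \<inter> Phi_bullet \<Phi> s'"
      and pw: "\<forall>i<length \<beta>s. \<forall>j<length \<beta>s. i \<noteq> j \<longrightarrow> strongly_orthogonal \<Phi> (\<beta>s ! i) (\<beta>s ! j)"
      and fold: "s' = foldl (\<lambda>f \<beta>. f \<circ> refl \<beta>) \<epsilon> \<beta>s"
      and fix': "\<forall>v. s' v = v \<longrightarrow> \<epsilon> v = v" by blast
    have setb: "\<forall>g\<in>set \<beta>s. g \<in> \<Psi> \<and> g \<bullet> \<beta> = 0 \<and> g \<noteq> \<beta>" using set sub by auto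
    have so: "strongly_orthogonal \<Phi> g \<beta> \<and> strongly_orthogonal \<Phi> \<beta> g" if g: "g \<in> set \<beta>s" for g
    proof -
      have gP: "g \<in> \<Psi>" and gb: "g \<bullet> \<beta> = 0" and gnb: "g \<noteq> \<beta>" using setb g by auto
      have g0: "g \<noteq> 0" using gP z by (auto simp: \<Psi>_def Phi_bullet_def)
      have sg: "s g = - g" using gP by (auto simp: \<Psi>_def Phi_bullet_def)
      have notin: "e1 *\<^sub>R g + e2 *\<^sub>R \<beta> \<notin> \<Phi>" if "e1 = 1 \<or> e1 = -1" "e2 = 1 \<or> e2 = -1" for e1 e2
      proof
        assume "e1 *\<^sub>R g + e2 *\<^sub>R \<beta> \<in> \<Phi>"
        moreover have "s (e1 *\<^sub>R g + e2 *\<^sub>R \<beta>) = - (e1 *\<^sub>R g + e2 *\<^sub>R \<beta>)"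
          by (simp add: linear_add[OF lin_s] linear_scale[OF lin_s] sg sb)
        ultimately have "e1 *\<^sub>R g + e2 *\<^sub>R \<beta> \<in> \<Psi>" by (simp add: \<Psi>_def Phi_bullet_def)
        then have "(e1 *\<^sub>R g + e2 *\<^sub>R \<beta>) \<bullet> (e1 *\<^sub>R g + e2 *\<^sub>R \<beta>) \<le> \<beta> \<bullet> \<beta>" by (rule maxb)
        moreover have "(e1 *\<^sub>R g + e2 *\<^sub>R \<beta>) \<bullet> (e1 *\<^sub>R g + e2 *\<^sub>R \<beta>) = g \<bullet> g + \<beta> \<bullet> \<beta>"
          using that gb by (auto simp: inner_add_left inner_add_right inner_commute)
        moreover have "g \<bullet> g > 0" using g0 by simp
        ultimately show False by simp
      qed
      have "g + \<beta> \<notin> \<Phi>" using notin[of 1 1] by simp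
      moreover have "g - \<beta> \<notin> \<Phi>" using notin[of 1 "-1"] by simp
      moreover have "\<beta> - g \<notin> \<Phi>" using notin[of "-1" 1] by simp
      moreover have "\<beta> + g \<notin> \<Phi>" using notin[of 1 1] by (simp add: add.commute)
      ultimately show ?thesis using gb gnb by (simp add: strongly_orthogonal_def inner_commute)
    qed
    have epsb: "\<epsilon> \<beta> = \<beta>" using fix' s'b by simp
    show ?thesis
    proof (intro exI[of _ \<epsilon>] exI[of _ "\<beta>s @ [\<beta>]"] conjI)
      show "\<epsilon> \<in> special_inv_set \<Phi>" by (rule eps)
      show "distinct (\<beta>s @ [\<beta>])" using dis setb by auto
      show "set (\<beta>s @ [\<beta>]) \<subseteq> Phi_circ \<Phi> \<epsilon> \<inter> Phi_bullet \<Phi> s"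
        using set setb epsb b\<Psi> bPhi by (auto simp: \<Psi>_def Phi_circ_def)
      show "\<forall>i<length (\<beta>s @ [\<beta>]). \<forall>j<length (\<beta>s @ [\<beta>]). i \<noteq> j \<longrightarrow>
          strongly_orthogonal \<Phi> ((\<beta>s @ [\<beta>]) ! i) ((\<beta>s @ [\<beta>]) ! j)"
        using pw so by (intro pw_snoc) auto
      show "s = foldl (\<lambda>f \<beta>. f \<circ> refl \<beta>) \<epsilon> (\<beta>s @ [\<beta>])"
        using fold[symmetric] by (auto simp: s'_def refl_refl[OF b0] fun_eq_iff)
      show "\<forall>v. s v = v \<longrightarrow> \<epsilon> v = v"
      proof (intro allI impI)
        fix v assume sv: "s v = v"
        have "v \<bullet> \<beta> = - (v \<bullet> \<beta>)" using sI(6)[of v \<beta>] sv sb by simp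
        then have "v \<bullet> \<beta> = 0" by simp
        then have "s' v = v" by (simp add: s'_def refl_orth sv)
        then show "\<epsilon> v = v" using fix' by simp
      qed
    qed
  qed
qed

lemma generic:
  assumes L: "subspace L" and "finite A" "\<forall>a\<in>A. \<exists>y\<in>L. a \<bullet> y \<noteq> 0"
  shows "\<exists>x\<in>L. \<forall>a\<in>A. a \<bullet> x \<noteq> 0"
  using assms(2,3)
proof (induction A rule: finite_induct)
  case empty
  then show ?case using subspace_0[OF L] by auto
next
  case (insert a A)
  then obtain x where xL: "x \<in> L" and xA: "\<forall>b\<in>A. b \<bullet> x \<noteq> 0" by auto
  obtain y where yL: "y \<in> L" and ay: "a \<bullet> y \<noteq> 0" using insert.prems by auto
  define B where "B = (\<lambda>b. - (b \<bullet> x) / (b \<bullet> y)) ` insert a A"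
  have "finite B" using insert.hyps(1) by (simp add: B_def)
  then obtain t :: real where tB: "t \<notin> B" using ex_new_if_finite[OF infinite_UNIV_char_0] by blast
  have "x + t *\<^sub>R y \<in> L" using xL yL L by (simp add: subspace_add subspace_mul)
  moreover have "b \<bullet> (x + t *\<^sub>R y) \<noteq> 0" if b: "b \<in> insert a A" for b
  proof
    assume "b \<bullet> (x + t *\<^sub>R y) = 0"
    then have e: "b \<bullet> x + t * (b \<bullet> y) = 0" by (simp add: inner_add_right)
    show False
    proof (cases "b \<bullet> y = 0")
      case True
      then have "b \<noteq> a" using ay by auto
      then have "b \<in> A" using b by simp
      then show False using xA e True by simp
    next
      case False
      then have "t = - (b \<bullet> x) / (b \<bullet> y)" using e by (simp add: field_simps)
      then show False using tB b B_def by auto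
    qed
  qed
  ultimately show ?case by blast
qed

lemma fix_subspace:
  assumes "linear s" shows "subspace {v. s v = v}"
  unfolding subspace_def using assms by (simp add: linear_0 linear_add linear_scale)

lemma fix_witness:
  assumes "s \<in> inv_set \<Phi>" and "s a \<noteq> - a"
  shows "\<exists>y\<in>{v. s v = v}. a \<bullet> y \<noteq> 0"
proof -
  note sI = inv_setD[OF assms(1)]
  define y where "y = a + s a"
  have "s y = y" by (simp add: y_def linear_add[OF sI(4)] sI(5))
  moreover have "y \<bullet> y = 2 * (a \<bullet> y)"
  proof -
    have "s a \<bullet> s a = a \<bullet> a" using sI(1) by (simp add: orthogonal_transformation_def)
    then show ?thesis by (simp add: y_def inner_add_left inner_add_right inner_commute)
  qed
  moreover have "y \<noteq> 0" using assms(2) by (simp add: y_def add_eq_0_iff)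
  ultimately show ?thesis by (intro bexI[of _ y]) auto
qed

theorem proposition2p34:
  fixes \<Phi> :: "'a::euclidean_space set" and s :: "'a \<Rightarrow> 'a"
  assumes "reduced_cryst_root_system \<Phi>"
    and "s \<in> inv_set \<Phi>"
  shows "\<exists>C \<epsilon> (\<beta>s :: 'a list).
           weyl_chamber \<Phi> C \<and> \<epsilon> \<in> special_inv_set \<Phi> \<and>
           distinct \<beta>s \<and>
           set \<beta>s \<subseteq> Phi_circ \<Phi> \<epsilon> \<inter> Phi_bullet \<Phi> s \<and>
           (\<forall>i<length \<beta>s. \<forall>j<length \<beta>s. i \<noteq> j \<longrightarrow>
               strongly_orthogonal \<Phi> (\<beta>s ! i) (\<beta>s ! j)) \<and>
           s = foldl (\<lambda>f \<beta>. f \<circ> refl \<beta>) \<epsilon> \<beta>s \<and>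
           S_chamber \<Phi> s C \<and> S_chamber \<Phi> \<epsilon> C \<and>
           \<epsilon> ` pos_roots \<Phi> C = pos_roots \<Phi> C"
proof -
  have fin: "finite \<Phi>" and z: "0 \<notin> \<Phi>" and R: "\<forall>\<alpha>\<in>\<Phi>. refl \<alpha> ` \<Phi> = \<Phi>"
    using assms(1) by (auto simp: reduced_cryst_root_system_def)
  obtain \<epsilon> \<beta>s where eps: "\<epsilon> \<in> special_inv_set \<Phi>" and dis: "distinct \<beta>s"
      and set: "set \<beta>s \<subseteq> Phi_circ \<Phi> \<epsilon> \<inter> Phi_bullet \<Phi> s"
      and pw: "\<forall>i<length \<beta>s. \<forall>j<length \<beta>s. i \<noteq> j \<longrightarrow> strongly_orthogonal \<Phi> (\<beta>s ! i) (\<beta>s ! j)"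
      and fold: "s = foldl (\<lambda>f \<beta>. f \<circ> refl \<beta>) \<epsilon> \<beta>s"
      and fixs: "\<forall>v. s v = v \<longrightarrow> \<epsilon> v = v"
    using decomp[OF fin z R assms(2)] by blast
  have epsI: "\<epsilon> \<in> inv_set \<Phi>" and epsB: "Phi_bullet \<Phi> \<epsilon> = {}"
    using eps by (auto simp: special_inv_set_def)
  note sI = inv_setD[OF assms(2)]
  note eI = inv_setD[OF epsI]
  have "\<exists>x\<in>{v. s v = v}. \<forall>a\<in>Phi_star \<Phi> s. a \<bullet> x \<noteq> 0"
  proof (rule generic[OF fix_subspace[OF sI(4)]])
    show "finite (Phi_star \<Phi> s)" using fin by (simp add: Phi_star_def)
    show "\<forall>a\<in>Phi_star \<Phi> s. \<exists>y\<in>{v. s v = v}. a \<bullet> y \<noteq> 0"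
    proof
      fix a assume "a \<in> Phi_star \<Phi> s"
      then have "s a \<noteq> - a" by (auto simp: Phi_star_def Phi_bullet_def)
      then show "\<exists>y\<in>{v. s v = v}. a \<bullet> y \<noteq> 0" by (rule fix_witness[OF assms(2)])
    qed
  qed
  then obtain u where su: "s u = u" and u: "\<forall>a\<in>Phi_star \<Phi> s. a \<bullet> u \<noteq> 0" by auto
  have eu: "\<epsilon> u = u" using fixs su by simp
  have "\<exists>x\<in>{v. \<epsilon> v = v}. \<forall>a\<in>\<Phi>. a \<bullet> x \<noteq> 0"
  proof (rule generic[OF fix_subspace[OF eI(4)] fin])
    show "\<forall>a\<in>\<Phi>. \<exists>y\<in>{v. \<epsilon> v = v}. a \<bullet> y \<noteq> 0"
    proof
      fix a assume "a \<in> \<Phi>"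
      then have "\<epsilon> a \<noteq> - a" using epsB by (auto simp: Phi_bullet_def)
      then show "\<exists>y\<in>{v. \<epsilon> v = v}. a \<bullet> y \<noteq> 0" by (rule fix_witness[OF epsI])
    qed
  qed
  then obtain v where ev: "\<epsilon> v = v" and v: "\<forall>a\<in>\<Phi>. a \<bullet> v \<noteq> 0" by auto
  define P where "P t a \<longleftrightarrow> a \<bullet> (u + t *\<^sub>R v) \<noteq> 0 \<and>
     (a \<in> Phi_star \<Phi> s \<longrightarrow> a \<bullet> (u + t *\<^sub>R v) > 0 \<longrightarrow> a \<bullet> (u + t *\<^sub>R s v) > 0)" for t :: real and a
  have "\<forall>a\<in>\<Phi>. eventually (\<lambda>t. P t a) (at_right 0)"
  proof
    fix a assume a: "a \<in> \<Phi>"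
    have e1: "a \<bullet> (u + t *\<^sub>R w) = a \<bullet> u + t * (a \<bullet> w)" for t w by (simp add: inner_add_right)
    have lim: "((\<lambda>t. a \<bullet> (u + t *\<^sub>R w)) \<longlongrightarrow> a \<bullet> u) (at_right 0)" for w
    proof -
      have "((\<lambda>t. a \<bullet> u + t * (a \<bullet> w)) \<longlongrightarrow> a \<bullet> u + 0 * (a \<bullet> w)) (at_right 0)"
        by (intro tendsto_intros)
      then show ?thesis by (simp add: e1)
    qed
    consider "a \<bullet> u > 0" | "a \<bullet> u < 0" | "a \<bullet> u = 0" by linarith
    then show "eventually (\<lambda>t. P t a) (at_right 0)"
    proof cases
      case 1
      have "eventually (\<lambda>t. a \<bullet> (u + t *\<^sub>R v) > 0) (at_right 0)"
        using order_tendstoD(1)[OF lim 1] .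
      moreover have "eventually (\<lambda>t. a \<bullet> (u + t *\<^sub>R s v) > 0) (at_right 0)"
        using order_tendstoD(1)[OF lim 1] .
      ultimately show ?thesis by eventually_elim (auto simp: P_def)
    next
      case 2
      have "eventually (\<lambda>t. a \<bullet> (u + t *\<^sub>R v) < 0) (at_right 0)"
        using order_tendstoD(2)[OF lim 2] .
      then show ?thesis by eventually_elim (auto simp: P_def)
    next
      case 3
      then have "a \<notin> Phi_star \<Phi> s" using u by auto
      moreover have "eventually (\<lambda>t. t > (0::real)) (at_right 0)" by (rule eventually_at_right_less)
      ultimately show ?thesis using v a 3 by (elim eventually_mono) (auto simp: P_def e1)
    qed
  qed
  then have "eventually (\<lambda>t. \<forall>a\<in>\<Phi>. P t a) (at_right 0)" using fin by (intro eventually_ball_finite)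
  then obtain t where tP: "\<forall>a\<in>\<Phi>. P t a" using eventually_happens[of _ "at_right (0::real)"] by auto
  define x where "x = u + t *\<^sub>R v"
  have ex: "\<epsilon> x = x" by (simp add: x_def linear_add[OF eI(4)] linear_scale[OF eI(4)] eu ev)
  have sx: "s x = u + t *\<^sub>R s v" by (simp add: x_def linear_add[OF sI(4)] linear_scale[OF sI(4)] su)
  define U where "U = - (\<Union>\<alpha>\<in>\<Phi>. {x. \<alpha> \<bullet> x = 0})"
  have xU: "x \<in> U" using tP by (auto simp: U_def P_def x_def)
  define C where "C = connected_component_set U x"
  have wc: "weyl_chamber \<Phi> C" unfolding weyl_chamber_def Let_def U_def[symmetric] C_def
    using xU by blast
  have xC: "x \<in> C" using xU by (simp add: C_def)
  have posC: "a \<bullet> y > 0" if a: "a \<in> \<Phi>" "a \<bullet> x > 0" and y: "y \<in> C" for a y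
  proof (rule ccontr)
    assume "\<not> a \<bullet> y > 0"
    then have "a \<bullet> y \<le> 0" by simp
    then obtain w where "w \<in> C" "a \<bullet> w = 0"
      using connected_ivt_hyperplane[OF _ y xC, of a 0] a by (auto simp: C_def)
    moreover have "C \<subseteq> U" by (simp add: C_def connected_component_subset)
    ultimately show False using a by (auto simp: U_def)
  qed
  have pos: "pos_roots \<Phi> C = {a \<in> \<Phi>. a \<bullet> x > 0}"
    unfolding pos_roots_def using posC xC by auto
  have Ss: "S_chamber \<Phi> s C"
    unfolding S_chamber_def pos
  proof safe
    fix a assume a: "a \<in> \<Phi>" "a \<bullet> x > 0" "a \<in> Phi_star \<Phi> s"
    show "s a \<in> \<Phi>" using a sI(3) by auto
    have "a \<bullet> (u + t *\<^sub>R s v) > 0" using tP a by (auto simp: P_def x_def)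
    then show "s a \<bullet> x > 0" using sI(6)[of a x] sx by simp
  qed
  have ep: "\<epsilon> a \<in> \<Phi> \<and> \<epsilon> a \<bullet> x > 0" if "a \<in> \<Phi>" "a \<bullet> x > 0" for a
    using that eI(3) eI(6)[of a x] ex by auto
  have Se: "S_chamber \<Phi> \<epsilon> C"
    unfolding S_chamber_def pos using ep by auto
  have img: "\<epsilon> ` pos_roots \<Phi> C = pos_roots \<Phi> C"
    unfolding pos
  proof
    show "\<epsilon> ` {a \<in> \<Phi>. 0 < a \<bullet> x} \<subseteq> {a \<in> \<Phi>. 0 < a \<bullet> x}" using ep by auto
    show "{a \<in> \<Phi>. 0 < a \<bullet> x} \<subseteq> \<epsilon> ` {a \<in> \<Phi>. 0 < a \<bullet> x}"
    proof
      fix a assume "a \<in> {a \<in> \<Phi>. 0 < a \<bullet> x}"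
      then have "\<epsilon> a \<in> {a \<in> \<Phi>. 0 < a \<bullet> x}" using ep by auto
      moreover have "a = \<epsilon> (\<epsilon> a)" using eI(5) by simp
      ultimately show "a \<in> \<epsilon> ` {a \<in> \<Phi>. 0 < a \<bullet> x}" by blast
    qed
  qed
  show ?thesis using wc eps dis set pw fold Ss Se img by blast
qed

end
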